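(* Let $\lambda>0$ and consider the problem $\min_{x\in\mathbb{R}} f(x)=\frac{\lambda}{2}x^2$, whose minimizer is $x^\star=0$. Let $a,b\in\mathbb{R}$ satisfy $a^2+4b\le 0$, and consider the optimization method $x_{k+1}=a x_k+b x_{k-1}$ ($k\ge 1$), started from arbitrary $x_0,x_1\in\mathbb{R}$. Assume the method is convergent. Then $$V(x_k,x_{k-1},x_{k-2})=x_{k-1}^2-x_k x_{k-2}$$ is a Lyapunov function for this method.
   Context: The method is called convergent if $x_k\to 0$ for every choice of initial values $x_0,x_1$; equivalently, the iteration matrix $M=\begin{bmatrix} a & b\\ 1 & 0\end{bmatrix}$ (which maps $(x_k,x_{k-1})^T$ to $(x_{k+1},x_k)^T$) has spectral radius $\rho(M)<1$. A function $V(x_k,x_{k-1},x_{k-2})$ is called a Lyapunov function for the method if, along every trajectory of the method, $V(x_k,x_{k-1},x_{k-2})\ge 0$ for all $k\ge 2$ and $V(x_{k+1},x_k,x_{k-1})\le V(x_k,x_{k-1},x_{k-2})$ for all $k\ge 2$ (i.e. it is nonnegative and monotonically non-increasing along the iterates). *)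

theory Defs
  imports Complex_Main
begin

definition trajectory :: "real \<Rightarrow> real \<Rightarrow> (nat \<Rightarrow> real) \<Rightarrow> bool" where
  "trajectory a b x \<longleftrightarrow> (\<forall>k\<ge>1. x (Suc k) = a * x k + b * x (k - 1))"

definition convergent_method :: "real \<Rightarrow> real \<Rightarrow> bool" where
  "convergent_method a b \<longleftrightarrow> (\<forall>x. trajectory a b x \<longrightarrow> x \<longlonglongrightarrow> 0)"

definition lyapunov :: "real \<Rightarrow> real \<Rightarrow> (real \<Rightarrow> real \<Rightarrow> real \<Rightarrow> real) \<Rightarrow> bool" where
  "lyapunov a b V \<longleftrightarrow> (\<forall>x. trajectory a b x \<longrightarrow>
     (\<forall>k\<ge>2. V (x k) (x (k - 1)) (x (k - 2)) \<ge> 0 \<and>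
             V (x (Suc k)) (x k) (x (k - 1)) \<le> V (x k) (x (k - 1)) (x (k - 2))))"

end

theory Submission
  imports Defs
begin

fun seq0 :: "real \<Rightarrow> real \<Rightarrow> nat \<Rightarrow> real" where
  "seq0 a b 0 = 0"
| "seq0 a b (Suc 0) = 1"
| "seq0 a b (Suc (Suc n)) = a * seq0 a b (Suc n) + b * seq0 a b n"

lemma seq0_traj: "trajectory a b (seq0 a b)"
  unfolding trajectory_def
proof (intro allI impI)
  fix k :: nat assume "1 \<le> k"
  then obtain m where "k = Suc m" by (cases k) auto
  then show "seq0 a b (Suc k) = a * seq0 a b k + b * seq0 a b (k - 1)" by simp
qed

lemma traj_eq:
  assumes "trajectory a b x"
  shows "x (Suc (Suc m)) = a * x (Suc m) + b * x m"
  using assms unfolding trajectory_def by (drule_tac x="Suc m" in spec) simp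

lemma step_eq:
  assumes "trajectory a b x"
  shows "x (Suc (Suc m)) ^ 2 - x (Suc (Suc (Suc m))) * x (Suc m)
     = - b * (x (Suc m) ^ 2 - x (Suc (Suc m)) * x m)"
proof -
  have e1: "x (Suc (Suc (Suc m))) = a * x (Suc (Suc m)) + b * x (Suc m)" using traj_eq[OF assms] .
  have e2: "x (Suc (Suc m)) = a * x (Suc m) + b * x m" using traj_eq[OF assms] .
  show ?thesis unfolding e1 e2 by (simp add: algebra_simps power2_eq_square)
qed

lemma b_ge:
  assumes "convergent_method a b"
  shows "-b < 1"
proof (rule ccontr)
  assume nb: "\<not> - b < 1"
  let ?x = "seq0 a b"
  define W where "W n = ?x (n+1) ^ 2 - ?x (n+2) * ?x n" for n
  have W: "W (Suc n) = - b * W n" for n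
    unfolding W_def by (simp add: algebra_simps power2_eq_square)
  have ge: "W n \<ge> 1" for n
  proof (induction n)
    case 0 then show ?case by (simp add: W_def)
  next
    case (Suc n)
    have "1 * 1 \<le> - b * W n" using Suc nb by (intro mult_mono) auto
    then show ?case using W by simp
  qed
  have lim: "?x \<longlonglongrightarrow> 0" using assms seq0_traj unfolding convergent_method_def by blast
  have l1: "(\<lambda>n. ?x (n+1)) \<longlonglongrightarrow> 0" using LIMSEQ_ignore_initial_segment[OF lim, of 1] by simp
  have l2: "(\<lambda>n. ?x (n+2)) \<longlonglongrightarrow> 0" using LIMSEQ_ignore_initial_segment[OF lim, of 2] by simp
  have "W \<longlonglongrightarrow> 0 ^ 2 - 0 * 0" unfolding W_def
    by (intro tendsto_intros l1 l2 lim)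
  then have "W \<longlonglongrightarrow> 0" by simp
  moreover have "1 \<le> (0::real)"
    using ge by (intro LIMSEQ_le_const[OF calculation]) auto
  ultimately show False by simp
qed

theorem theorem1:
  fixes lam a b :: real
  assumes "lam > 0"
    and "a\<^sup>2 + 4 * b \<le> 0"
    and "convergent_method a b"
  shows "lyapunov a b (\<lambda>xk xk1 xk2. xk1\<^sup>2 - xk * xk2)"
  unfolding lyapunov_def
proof (intro allI impI conjI)
  fix x k assume tr: "trajectory a b x" and k: "2 \<le> (k::nat)"
  obtain m where m: "k = Suc (Suc m)" using k by (metis add_2_eq_Suc le_Suc_ex)
  have e2: "x k = a * x (k - 1) + b * x (k - 2)" using traj_eq[OF tr, of m] m by simp
  have "0 \<le> (x (k - 1) - a * x (k - 2) / 2)^2 + (-b - a^2/4) * x (k-2)^2"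
    using assms(2) by (intro add_nonneg_nonneg mult_nonneg_nonneg) auto
  also have "\<dots> = x (k - 1)^2 - x k * x (k - 2)"
    unfolding e2 by (simp add: algebra_simps power2_eq_square)
  finally show nn: "0 \<le> x (k - 1)^2 - x k * x (k - 2)" .
  have "x k ^ 2 - x (Suc k) * x (k - 1) = - b * (x (k - 1) ^ 2 - x k * x (k - 2))"
    using step_eq[OF tr, of m] m by simp
  also have "\<dots> \<le> 1 * (x (k - 1) ^ 2 - x k * x (k - 2))"
    using b_ge[OF assms(3)] nn by (intro mult_right_mono) auto
  finally show "x k ^ 2 - x (Suc k) * x (k - 1) \<le> x (k - 1)^2 - x k * x (k - 2)" by simp
qed

end
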